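(* Let $p,q\ge 3$. If there exists a $p$-core of type $(x_1,\dots,x_p)$ and a $q$-core of type $(y_1,\dots,y_q)$, then there exists a $(p+q-1)$-core of type $(x_1,\dots,x_{p-1},x_p+y_1,y_2,\dots,y_q)$.
   Context: For $p\ge 3$, a $p$-core of type $(x_1,\dots,x_p)$ consists of pairwise disjoint finite sets $C_1,\dots,C_p$ (the classes) with $|C_i|=x_i$, together with sets $B_1,\dots,B_p\subseteq C_1\cup\dots\cup C_p$ such that $B_1\cup\dots\cup B_p=C_1\cup\dots\cup C_p$, and: (i) $B_i\cap C_i=\emptyset$ and $|B_i\cap C_j|=1$ for all $j\ne i$ (so $|B_i|=p-1$); (ii) $|B_i\cap B_j|+p$ is odd for all $1\le i,j\le p$. *)

theory Defs
  imports Main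
begin

definition is_core :: "nat \<Rightarrow> (nat \<Rightarrow> nat) \<Rightarrow> (nat \<Rightarrow> 'a set) \<Rightarrow> (nat \<Rightarrow> 'a set) \<Rightarrow> bool" where
  "is_core p x C B \<longleftrightarrow>
     (\<forall>i\<in>{1..p}. finite (C i) \<and> card (C i) = x i) \<and>
     (\<forall>i\<in>{1..p}. \<forall>j\<in>{1..p}. i \<noteq> j \<longrightarrow> C i \<inter> C j = {}) \<and>
     (\<forall>i\<in>{1..p}. B i \<subseteq> (\<Union>k\<in>{1..p}. C k)) \<and>
     (\<Union>i\<in>{1..p}. B i) = (\<Union>k\<in>{1..p}. C k) \<and>
     (\<forall>i\<in>{1..p}. B i \<inter> C i = {}) \<and>
     (\<forall>i\<in>{1..p}. \<forall>j\<in>{1..p}. i \<noteq> j \<longrightarrow> card (B i \<inter> C j) = 1) \<and>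
     (\<forall>i\<in>{1..p}. \<forall>j\<in>{1..p}. odd (card (B i \<inter> B j) + p))"

end

theory Submission
  imports Defs
begin

lemma core_transfer:
  assumes c: "is_core n x C B" and inj: "inj_on h (\<Union>k\<in>{1..n}. C k)"
  shows "is_core n x (\<lambda>i. h ` C i) (\<lambda>i. h ` B i)"
proof -
  let ?U = "\<Union>k\<in>{1..n}. C k"
  have CU: "\<And>i. i \<in> {1..n} \<Longrightarrow> C i \<subseteq> ?U" by blast
  have BU: "\<And>i. i \<in> {1..n} \<Longrightarrow> B i \<subseteq> ?U" using c unfolding is_core_def by blast
  have im: "\<And>S T. S \<subseteq> ?U \<Longrightarrow> T \<subseteq> ?U \<Longrightarrow> h ` (S \<inter> T) = h ` S \<inter> h ` T"
    using inj by (simp add: inj_on_image_Int)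
  have cd: "\<And>S. S \<subseteq> ?U \<Longrightarrow> card (h ` S) = card S"
    using inj by (meson card_image inj_on_subset)
  show ?thesis unfolding is_core_def
  proof (intro conjI ballI impI)
    fix i assume i: "i \<in> {1..n}"
    show "finite (h ` C i)" using c i unfolding is_core_def by auto
    show "card (h ` C i) = x i" using c i cd[OF CU[OF i]] unfolding is_core_def by auto
    show "h ` B i \<subseteq> (\<Union>k\<in>{1..n}. h ` C k)" using BU[OF i] by blast
    show "h ` B i \<inter> h ` C i = {}" using c i im[OF BU[OF i] CU[OF i]] unfolding is_core_def by auto
  next
    fix i j assume i: "i \<in> {1..n}" and j: "j \<in> {1..n}"
    have s1: "B i \<inter> B j \<subseteq> ?U" using BU[OF i] by blast
    have e1: "card (h ` B i \<inter> h ` B j) = card (B i \<inter> B j)"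
      using im[OF BU[OF i] BU[OF j]] cd[OF s1] by simp
    show "odd (card (h ` B i \<inter> h ` B j) + n)"
      unfolding e1 using c i j unfolding is_core_def by blast
    assume ij: "i \<noteq> j"
    show "h ` C i \<inter> h ` C j = {}" using c i j ij im[OF CU[OF i] CU[OF j]] unfolding is_core_def by auto
    have s2: "B i \<inter> C j \<subseteq> ?U" using BU[OF i] by blast
    have e2: "card (h ` B i \<inter> h ` C j) = card (B i \<inter> C j)"
      using im[OF BU[OF i] CU[OF j]] cd[OF s2] by simp
    show "card (h ` B i \<inter> h ` C j) = 1"
      unfolding e2 using c i j ij unfolding is_core_def by blast
  next
    show "(\<Union>i\<in>{1..n}. h ` B i) = (\<Union>k\<in>{1..n}. h ` C k)"
      using c unfolding is_core_def by (metis image_UN)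
  qed
qed

lemma core_facts:
  assumes "is_core p x C B"
  shows "\<And>i. i \<in> {1..p} \<Longrightarrow> finite (C i)"
   and "\<And>i. i \<in> {1..p} \<Longrightarrow> card (C i) = x i"
   and "\<And>i j. i \<in> {1..p} \<Longrightarrow> j \<in> {1..p} \<Longrightarrow> i \<noteq> j \<Longrightarrow> C i \<inter> C j = {}"
   and "\<And>i. i \<in> {1..p} \<Longrightarrow> B i \<inter> C i = {}"
   and "\<And>i j. i \<in> {1..p} \<Longrightarrow> j \<in> {1..p} \<Longrightarrow> i \<noteq> j \<Longrightarrow> card (B i \<inter> C j) = 1"
   and "\<And>i j. i \<in> {1..p} \<Longrightarrow> j \<in> {1..p} \<Longrightarrow> odd (card (B i \<inter> B j) + p)"
   and "\<And>i. i \<in> {1..p} \<Longrightarrow> B i \<subseteq> (\<Union>k\<in>{1..p}. C k)"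
   and "(\<Union>k\<in>{1..p}. B k) = (\<Union>k\<in>{1..p}. C k)"
  using assms unfolding is_core_def by simp_all

lemma card_sum_img:
  "finite A \<Longrightarrow> finite B \<Longrightarrow> card (Inl ` A \<union> Inr ` B) = card A + card B"
  by (subst card_Un_disjoint) (auto simp: card_image)

lemma int_sum:
  "(Inl ` A \<union> Inr ` B) \<inter> (Inl ` A' \<union> Inr ` B') = Inl ` (A \<inter> A') \<union> Inr ` (B \<inter> B')"
  by auto

lemma sum_core:
  fixes C1 B1 :: "nat \<Rightarrow> 'a set" and C2 B2 :: "nat \<Rightarrow> 'b set"
  assumes p3: "p \<ge> 3" and q3: "q \<ge> 3"
    and c1: "is_core p x C1 B1" and c2: "is_core q y C2 B2"
  defines "P \<equiv> \<lambda>i. if i \<le> p then C1 i else {}"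
    and "Q \<equiv> \<lambda>i. if p \<le> i then C2 (i - p + 1) else {}"
    and "R \<equiv> \<lambda>i. B1 (min i p)"
    and "S \<equiv> \<lambda>i. B2 (if i \<le> p then 1 else i - p + 1)"
  shows "is_core (p + q - 1)
           (\<lambda>i. if i < p then x i else if i = p then x p + y 1 else y (i - p + 1))
           (\<lambda>i. Inl ` P i \<union> Inr ` Q i) (\<lambda>i. Inl ` R i \<union> Inr ` S i)"
proof -
  let ?n = "p + q - 1"
  let ?U1 = "\<Union>k\<in>{1..p}. C1 k"
  let ?U2 = "\<Union>k\<in>{1..q}. C2 k"
  have fC1: "\<And>i. i \<in> {1..p} \<Longrightarrow> finite (C1 i)"
   and kC1: "\<And>i. i \<in> {1..p} \<Longrightarrow> card (C1 i) = x i"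
   and dC1: "\<And>i j. i \<in> {1..p} \<Longrightarrow> j \<in> {1..p} \<Longrightarrow> i \<noteq> j \<Longrightarrow> C1 i \<inter> C1 j = {}"
   and eB1: "\<And>i. i \<in> {1..p} \<Longrightarrow> B1 i \<inter> C1 i = {}"
   and kB1: "\<And>i j. i \<in> {1..p} \<Longrightarrow> j \<in> {1..p} \<Longrightarrow> i \<noteq> j \<Longrightarrow> card (B1 i \<inter> C1 j) = 1"
   and oB1: "\<And>i j. i \<in> {1..p} \<Longrightarrow> j \<in> {1..p} \<Longrightarrow> odd (card (B1 i \<inter> B1 j) + p)"
    using core_facts[OF c1] by auto
  have fC2: "\<And>i. i \<in> {1..q} \<Longrightarrow> finite (C2 i)"
   and kC2: "\<And>i. i \<in> {1..q} \<Longrightarrow> card (C2 i) = y i"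
   and dC2: "\<And>i j. i \<in> {1..q} \<Longrightarrow> j \<in> {1..q} \<Longrightarrow> i \<noteq> j \<Longrightarrow> C2 i \<inter> C2 j = {}"
   and eB2: "\<And>i. i \<in> {1..q} \<Longrightarrow> B2 i \<inter> C2 i = {}"
   and kB2: "\<And>i j. i \<in> {1..q} \<Longrightarrow> j \<in> {1..q} \<Longrightarrow> i \<noteq> j \<Longrightarrow> card (B2 i \<inter> C2 j) = 1"
   and oB2: "\<And>i j. i \<in> {1..q} \<Longrightarrow> j \<in> {1..q} \<Longrightarrow> odd (card (B2 i \<inter> B2 j) + q)"
    using core_facts[OF c2] by auto
  have fU1: "finite ?U1" using fC1 by blast
  have fU2: "finite ?U2" using fC2 by blast
  have BU1: "\<And>i. i \<in> {1..p} \<Longrightarrow> B1 i \<subseteq> ?U1" using core_facts[OF c1] by auto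
  have BU2: "\<And>i. i \<in> {1..q} \<Longrightarrow> B2 i \<subseteq> ?U2" using core_facts[OF c2] by auto
  have Rr: "\<And>i. i \<in> {1..?n} \<Longrightarrow> min i p \<in> {1..p}" using p3 q3 by auto
  have Sr: "\<And>i. i \<in> {1..?n} \<Longrightarrow> (if i \<le> p then 1 else i - p + 1) \<in> {1..q}" using p3 q3 by auto
  have fR: "\<And>i. i \<in> {1..?n} \<Longrightarrow> finite (R i)"
    unfolding R_def by (rule finite_subset[OF BU1[OF Rr] fU1])
  have fS: "\<And>i. i \<in> {1..?n} \<Longrightarrow> finite (S i)"
    unfolding S_def by (rule finite_subset[OF BU2[OF Sr] fU2])
  have fP: "\<And>i. i \<in> {1..?n} \<Longrightarrow> finite (P i)"
    unfolding P_def using fC1 by auto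
  have fQ: "\<And>i. i \<in> {1..?n} \<Longrightarrow> finite (Q i)"
    unfolding Q_def using fC2 p3 q3 by auto
  have UP: "(\<Union>k\<in>{1..?n}. P k) = ?U1"
  proof
    show "(\<Union>k\<in>{1..?n}. P k) \<subseteq> ?U1" unfolding P_def by auto
    show "?U1 \<subseteq> (\<Union>k\<in>{1..?n}. P k)" unfolding P_def using q3
      by (auto intro!: bexI)
  qed
  have UQ: "(\<Union>k\<in>{1..?n}. Q k) = ?U2"
  proof
    show "(\<Union>k\<in>{1..?n}. Q k) \<subseteq> ?U2"
    proof
      fix z assume "z \<in> (\<Union>k\<in>{1..?n}. Q k)"
      then obtain k where k: "k \<in> {1..?n}" "z \<in> Q k" by blast
      then have "p \<le> k" "z \<in> C2 (k - p + 1)" unfolding Q_def by (auto split: if_splits)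
      moreover have "k - p + 1 \<in> {1..q}" using k(1) p3 q3 by auto
      ultimately show "z \<in> ?U2" by blast
    qed
    show "?U2 \<subseteq> (\<Union>k\<in>{1..?n}. Q k)"
    proof
      fix z assume "z \<in> ?U2"
      then obtain k where k: "k \<in> {1..q}" "z \<in> C2 k" by blast
      then have "z \<in> Q (k + p - 1)" "k + p - 1 \<in> {1..?n}" unfolding Q_def using p3 by auto
      then show "z \<in> (\<Union>k\<in>{1..?n}. Q k)" by blast
    qed
  qed
  have UR: "(\<Union>k\<in>{1..?n}. R k) = (\<Union>k\<in>{1..p}. B1 k)"
  proof
    show "(\<Union>k\<in>{1..?n}. R k) \<subseteq> (\<Union>k\<in>{1..p}. B1 k)" unfolding R_def using Rr by blast
    show "(\<Union>k\<in>{1..p}. B1 k) \<subseteq> (\<Union>k\<in>{1..?n}. R k)"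
    proof
      fix z assume "z \<in> (\<Union>k\<in>{1..p}. B1 k)"
      then obtain k where k: "k \<in> {1..p}" "z \<in> B1 k" by blast
      then have "z \<in> R k" "k \<in> {1..?n}" unfolding R_def using q3 by auto
      then show "z \<in> (\<Union>k\<in>{1..?n}. R k)" by blast
    qed
  qed
  have US: "(\<Union>k\<in>{1..?n}. S k) = (\<Union>k\<in>{1..q}. B2 k)"
  proof
    show "(\<Union>k\<in>{1..?n}. S k) \<subseteq> (\<Union>k\<in>{1..q}. B2 k)" unfolding S_def using Sr by blast
    show "(\<Union>k\<in>{1..q}. B2 k) \<subseteq> (\<Union>k\<in>{1..?n}. S k)"
    proof
      fix z assume "z \<in> (\<Union>k\<in>{1..q}. B2 k)"
      then obtain k where k: "k \<in> {1..q}" "z \<in> B2 k" by blast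
      show "z \<in> (\<Union>k\<in>{1..?n}. S k)"
      proof (cases "k = 1")
        case True
        then have "z \<in> S 1" "1 \<in> {1..?n}" unfolding S_def using k p3 by auto
        then show ?thesis by blast
      next
        case False
        then have "z \<in> S (k + p - 1)" "k + p - 1 \<in> {1..?n}" unfolding S_def using k p3 by auto
        then show ?thesis by blast
      qed
    qed
  qed
  have UB1: "(\<Union>k\<in>{1..p}. B1 k) = ?U1" using core_facts[OF c1] by auto
  have UB2: "(\<Union>k\<in>{1..q}. B2 k) = ?U2" using core_facts[OF c2] by auto
  have UC: "(\<Union>k\<in>{1..?n}. Inl ` P k \<union> Inr ` Q k) = Inl ` ?U1 \<union> Inr ` ?U2"
  proof -
    have "(\<Union>k\<in>{1..?n}. Inl ` P k \<union> Inr ` Q k) = Inl ` (\<Union>k\<in>{1..?n}. P k) \<union> Inr ` (\<Union>k\<in>{1..?n}. Q k)"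
      by (simp add: UN_Un_distrib image_UN)
    then show ?thesis unfolding UP UQ .
  qed
  have UB: "(\<Union>k\<in>{1..?n}. Inl ` R k \<union> Inr ` S k) = Inl ` ?U1 \<union> Inr ` ?U2"
  proof -
    have "(\<Union>k\<in>{1..?n}. Inl ` R k \<union> Inr ` S k) = Inl ` (\<Union>k\<in>{1..?n}. R k) \<union> Inr ` (\<Union>k\<in>{1..?n}. S k)"
      by (simp add: UN_Un_distrib image_UN)
    then show ?thesis unfolding UR US UB1 UB2 .
  qed
  show ?thesis unfolding is_core_def
  proof (intro conjI ballI impI)
    fix i assume i: "i \<in> {1..?n}"
    show "finite (Inl ` P i \<union> Inr ` Q i)" using fP[OF i] fQ[OF i] by simp
    have "card (P i) + card (Q i) =
      (if i < p then x i else if i = p then x p + y 1 else y (i - p + 1))"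
    proof -
      consider "i < p" | "i = p" | "i > p" by linarith
      then show ?thesis
      proof cases
        case 1 then show ?thesis using kC1[of i] i unfolding P_def Q_def by simp
      next
        case 2 then show ?thesis using kC1[of p] kC2[of 1] p3 q3 unfolding P_def Q_def by simp
      next
        case 3 then show ?thesis using kC2[of "i - p + 1"] i unfolding P_def Q_def by simp
      qed
    qed
    then show "card (Inl ` P i \<union> Inr ` Q i) =
      (if i < p then x i else if i = p then x p + y 1 else y (i - p + 1))"
      unfolding card_sum_img[OF fP[OF i] fQ[OF i]] .
    show "Inl ` R i \<union> Inr ` S i \<subseteq> (\<Union>k\<in>{1..?n}. Inl ` P k \<union> Inr ` Q k)"
      unfolding UC R_def S_def by (intro Un_mono image_mono BU1[OF Rr[OF i]] BU2[OF Sr[OF i]])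
    have "R i \<inter> P i = {}" using eB1[of i] i unfolding R_def P_def by simp
    moreover have "S i \<inter> Q i = {}"
    proof (cases "i \<le> p")
      case True then show ?thesis using eB2[of 1] q3 unfolding S_def Q_def by simp
    next
      case False then show ?thesis using eB2[of "i - p + 1"] i unfolding S_def Q_def by simp
    qed
    ultimately show "(Inl ` R i \<union> Inr ` S i) \<inter> (Inl ` P i \<union> Inr ` Q i) = {}"
      unfolding int_sum by simp
  next
    fix i j assume i: "i \<in> {1..?n}" and j: "j \<in> {1..?n}"
    have o1: "odd (card (R i \<inter> R j) + p)" using oB1[OF Rr[OF i] Rr[OF j]] unfolding R_def .
    have o2: "odd (card (S i \<inter> S j) + q)" using oB2[OF Sr[OF i] Sr[OF j]] unfolding S_def .
    have "card ((Inl ` R i \<union> Inr ` S i) \<inter> (Inl ` R j \<union> Inr ` S j)) = card (R i \<inter> R j) + card (S i \<inter> S j)"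
      unfolding int_sum using fR[OF i] fS[OF i] by (simp add: card_sum_img)
    then show "odd (card ((Inl ` R i \<union> Inr ` S i) \<inter> (Inl ` R j \<union> Inr ` S j)) + ?n)"
      using o1 o2 p3 by simp
    assume ij: "i \<noteq> j"
    have "P i \<inter> P j = {}" using dC1[of i j] i j ij unfolding P_def by simp
    moreover have "Q i \<inter> Q j = {}" 
    proof (cases "p \<le> i \<and> p \<le> j")
      case True
      then have "i - p + 1 \<in> {1..q}" "j - p + 1 \<in> {1..q}" "i - p + 1 \<noteq> j - p + 1"
        using i j ij q3 by auto
      then show ?thesis using dC2 True unfolding Q_def by simp
    next
      case False then show ?thesis unfolding Q_def by auto
    qed
    ultimately show "(Inl ` P i \<union> Inr ` Q i) \<inter> (Inl ` P j \<union> Inr ` Q j) = {}"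
      unfolding int_sum by simp
    have "card (R i \<inter> P j) + card (S i \<inter> Q j) = 1"
    proof -
      consider "j < p" | "j = p" | "j > p" by linarith
      then show ?thesis
      proof cases
        case 1
        then have "card (R i \<inter> P j) = 1" using kB1[OF Rr[OF i], of j] i j ij
          unfolding R_def P_def by (auto simp: min_def)
        moreover have "Q j = {}" using 1 unfolding Q_def by simp
        ultimately show ?thesis by simp
      next
        case 2
        show ?thesis
        proof (cases "i < p")
          case True
          then have "card (R i \<inter> P j) = 1" using kB1[of i p] i 2 unfolding R_def P_def by simp
          moreover have "S i \<inter> Q j = {}" using eB2[of 1] q3 2 True unfolding S_def Q_def by simp
          ultimately show ?thesis by simp
        next
          case False
          then have gt: "i > p" using 2 ij by simp
          then have "R i \<inter> P j = {}" using eB1[of p] p3 2 unfolding R_def P_def by simp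
          moreover have "card (S i \<inter> Q j) = 1" using kB2[of "i - p + 1" 1] gt i q3 2
            unfolding S_def Q_def by simp
          ultimately show ?thesis by simp
        qed
      next
        case 3
        then have "P j = {}" unfolding P_def by simp
        moreover have "card (S i \<inter> Q j) = 1"
        proof (cases "i \<le> p")
          case True then show ?thesis using kB2[of 1 "j - p + 1"] 3 j q3 unfolding S_def Q_def by simp
        next
          case False then show ?thesis using kB2[of "i - p + 1" "j - p + 1"] 3 i j ij
            unfolding S_def Q_def by simp
        qed
        ultimately show ?thesis by simp
      qed
    qed
    then show "card ((Inl ` R i \<union> Inr ` S i) \<inter> (Inl ` P j \<union> Inr ` Q j)) = 1"
      unfolding int_sum using fR[OF i] fS[OF i] by (simp add: card_sum_img)
  next
    show "(\<Union>i\<in>{1..?n}. Inl ` R i \<union> Inr ` S i) = (\<Union>k\<in>{1..?n}. Inl ` P k \<union> Inr ` Q k)"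
      using UB UC by simp
  qed
qed

theorem lemma3p4:
  fixes p q :: nat and x y :: "nat \<Rightarrow> nat"
    and C1 B1 :: "nat \<Rightarrow> 'a set" and C2 B2 :: "nat \<Rightarrow> 'b set"
  assumes "p \<ge> 3" and "q \<ge> 3"
    and "is_core p x C1 B1" and "is_core q y C2 B2"
  shows "\<exists>C B :: nat \<Rightarrow> nat set. is_core (p + q - 1)
           (\<lambda>i. if i < p then x i else if i = p then x p + y 1 else y (i - p + 1)) C B"
proof -
  obtain C B where cb: "is_core (p + q - 1)
           (\<lambda>i. if i < p then x i else if i = p then x p + y 1 else y (i - p + 1)) (C :: nat \<Rightarrow> ('a + 'b) set) B"
    using sum_core[OF assms] by blast
  have "finite (\<Union>k\<in>{1..p + q - 1}. C k)" using core_facts(1)[OF cb] by blast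
  then obtain h :: "'a + 'b \<Rightarrow> nat" and m where "inj_on h (\<Union>k\<in>{1..p + q - 1}. C k)"
    using finite_imp_inj_to_nat_seg by blast
  from core_transfer[OF cb this] show ?thesis by blast
qed

end
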